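(* Let $k>0$ be real, let $M=\begin{bmatrix} k-1 & k-1 & k\\ 1&0&0\\ 0&1&0\end{bmatrix}$ and $N_0=\begin{bmatrix} k-1 & 2k & 2k\\ 2 & 1-k & 2\\ \frac{2}{k} & \frac{2}{k} & -\frac{1}{k}(k^2+k-2)\end{bmatrix}$. For integers $n\ge1$ put $\mathbf{j}_n=N_0M^n$, and define $$\mathbf{j}_{-n}=\begin{bmatrix} j_{-(n-1)} & t_{-(n+1)} & kj_{-n}\\ j_{-n} & t_{-(n+2)} & kj_{-(n+1)}\\ j_{-(n+1)} & t_{-(n+3)} & kj_{-(n+2)}\end{bmatrix},$$ where $t_{-m}=(k-1)j_{-(m-1)}+kj_{-m}$ for every integer $m$. Then for every integer $n\ge1$, $$\mathbf{j}_{-n}=M^{-n}N_0=N_0M^{-n}\qquad\text{and}\qquad \left(\mathbf{j}_n\right)^{-1}=N_0^{-1}\,\mathbf{j}_{-n}\,N_0^{-1}.$$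
   Context: For real $k>0$, the third-order $k$-Jacobsthal--Lucas sequence $(j_n)$ is defined by $j_0=2$, $j_1=k-1$, $j_2=k^2+1$ and $j_{n+3}=(k-1)j_{n+2}+(k-1)j_{n+1}+kj_n$, and extended to negative indices by the backward recurrence $j_{-n}=\frac{1-k}{k}j_{-(n-1)}+\frac{1-k}{k}j_{-(n-2)}+\frac{1}{k}j_{-(n-3)}$ for $n\ge1$. *)

theory Defs
  imports "HOL-Analysis.Analysis"
begin

fun jpos :: "real \<Rightarrow> nat \<Rightarrow> real" where
  "jpos k 0 = 2"
| "jpos k (Suc 0) = k - 1"
| "jpos k (Suc (Suc 0)) = k^2 + 1"
| "jpos k (Suc (Suc (Suc n))) =
     (k - 1) * jpos k (Suc (Suc n)) + (k - 1) * jpos k (Suc n) + k * jpos k n"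

text \<open>jneg k n is the term with index -n, via the backward recurrence.\<close>
fun jneg :: "real \<Rightarrow> nat \<Rightarrow> real" where
  "jneg k 0 = 2"
| "jneg k (Suc 0) =
     (1 - k) / k * jpos k 0 + (1 - k) / k * jpos k 1 + 1 / k * jpos k 2"
| "jneg k (Suc (Suc 0)) =
     (1 - k) / k * jneg k 1 + (1 - k) / k * jpos k 0 + 1 / k * jpos k 1"
| "jneg k (Suc (Suc (Suc n))) =
     (1 - k) / k * jneg k (Suc (Suc n)) + (1 - k) / k * jneg k (Suc n) + 1 / k * jneg k n"

definition jJL :: "real \<Rightarrow> int \<Rightarrow> real" where
  "jJL k i = (if 0 \<le> i then jpos k (nat i) else jneg k (nat (- i)))"

text \<open>tJL k m is the quantity t with index -m.\<close>
definition tJL :: "real \<Rightarrow> int \<Rightarrow> real" where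
  "tJL k m = (k - 1) * jJL k (- (m - 1)) + k * jJL k (- m)"

fun matpow :: "real^'n^'n \<Rightarrow> nat \<Rightarrow> real^'n^'n" where
  "matpow A 0 = mat 1"
| "matpow A (Suc n) = A ** matpow A n"

definition Mmat :: "real \<Rightarrow> real^3^3" where
  "Mmat k = vector [vector [k - 1, k - 1, k], vector [1, 0, 0], vector [0, 1, 0]]"

definition N0mat :: "real \<Rightarrow> real^3^3" where
  "N0mat k = vector [vector [k - 1, 2 * k, 2 * k],
                     vector [2, 1 - k, 2],
                     vector [2 / k, 2 / k, - (1 / k) * (k^2 + k - 2)]]"

definition jposmat :: "real \<Rightarrow> nat \<Rightarrow> real^3^3" where
  "jposmat k n = N0mat k ** matpow (Mmat k) n"

definition jnegmat :: "real \<Rightarrow> nat \<Rightarrow> real^3^3" where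
  "jnegmat k n = (let m = int n in
     vector [vector [jJL k (- (m - 1)), tJL k (m + 1), k * jJL k (- m)],
             vector [jJL k (- m), tJL k (m + 2), k * jJL k (- (m + 1))],
             vector [jJL k (- (m + 1)), tJL k (m + 3), k * jJL k (- (m + 2))]])"

end

theory Submission
  imports Defs
begin

definition Mi :: "real \<Rightarrow> real^3^3" where
  "Mi k = vector [vector [0, 1, 0], vector [0, 0, 1], vector [1/k, (1-k)/k, (1-k)/k]]"

lemma jJL_nonpos: "i \<le> 0 \<Longrightarrow> jJL k i = jneg k (nat (-i))"
  by (cases "i = 0") (auto simp: jJL_def)

lemma jnegmat_Suc: "jnegmat k (Suc p) = vector [vector [jneg k p, (k-1)*jneg k (p+1) + k*jneg k (p+2), k*jneg k (p+1)],
   vector [jneg k (p+1), (k-1)*jneg k (p+2) + k*jneg k (p+3), k*jneg k (p+2)],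
   vector [jneg k (p+2), (k-1)*jneg k (p+3) + k*jneg k (p+4), k*jneg k (p+3)]]"
  unfolding jnegmat_def Let_def tJL_def
  by (simp add: jJL_nonpos nat_add_distrib)

lemma jneg_rec: "jneg k (p+3) = (1 - k) / k * jneg k (p+2) + (1 - k) / k * jneg k (p+1) + 1 / k * jneg k p"
  by (simp add: numeral_3_eq_3 numeral_2_eq_2)

lemma MMi: "k \<noteq> 0 \<Longrightarrow> Mmat k ** Mi k = mat 1"
  by (simp add: Mmat_def Mi_def vec_eq_iff forall_3 matrix_matrix_mult_def sum_3 mat_def field_simps)

lemma step: "k \<noteq> 0 \<Longrightarrow> jnegmat k (Suc (Suc p)) = Mi k ** jnegmat k (Suc p)"
  unfolding jnegmat_Suc
  by (simp add: Mi_def vec_eq_iff forall_3 matrix_matrix_mult_def sum_3 numeral_eq_Suc field_simps)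

lemma base: "k \<noteq> 0 \<Longrightarrow> jnegmat k 1 = Mi k ** N0mat k"
  unfolding One_nat_def jnegmat_Suc
  by (simp add: Mi_def N0mat_def vec_eq_iff forall_3 matrix_matrix_mult_def sum_3 numeral_eq_Suc field_simps power2_eq_square)

lemma comm: "k \<noteq> 0 \<Longrightarrow> N0mat k ** Mi k = Mi k ** N0mat k"
  by (simp add: Mi_def N0mat_def vec_eq_iff forall_3 matrix_matrix_mult_def sum_3 field_simps power2_eq_square)

lemma detN0: "k > 0 \<Longrightarrow> det (N0mat k) \<noteq> 0"
proof -
  assume k: "k > 0"
  have "det (N0mat k) = (k+1)^2 * (k^2+k+2) / k"
    by (simp add: det_3 N0mat_def field_simps power2_eq_square)
  moreover have "(k+1)^2 * (k^2+k+2) / k > 0" using k by (simp add: add_pos_pos)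
  ultimately show ?thesis by (metis less_irrefl)
qed

lemma inv_unique:
  fixes A B :: "real^'n^'n"
  assumes "A ** B = mat 1"
  shows "matrix_inv A = B"
proof -
  have "B ** A = mat 1" using assms matrix_left_right_inverse by blast
  hence ex: "\<exists>A'. A ** A' = mat 1 \<and> A' ** A = mat 1" using assms by blast
  define C where "C = matrix_inv A"
  have C: "A ** C = mat 1 \<and> C ** A = mat 1"
    unfolding C_def matrix_inv_def by (rule someI_ex[OF ex])
  have "C = C ** (A ** B)" using assms by (simp add: matrix_mul_rid)
  also have "\<dots> = (C ** A) ** B" by (simp add: matrix_mul_assoc)
  also have "\<dots> = B" using C by (simp add: matrix_mul_lid)
  finally show ?thesis unfolding C_def .
qed

lemma inv_props:
  fixes A :: "real^'n^'n"
  assumes "invertible A"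
  shows "A ** matrix_inv A = mat 1 \<and> matrix_inv A ** A = mat 1"
  using assms unfolding invertible_def matrix_inv_def by (rule someI_ex)

lemma matpow_comm:
  fixes A B :: "real^'n^'n"
  assumes "A ** B = B ** A"
  shows "matpow A n ** B = B ** matpow A n"
proof (induction n)
  case 0 then show ?case by (simp add: matrix_mul_lid matrix_mul_rid)
next
  case (Suc n)
  have "matpow A (Suc n) ** B = A ** (matpow A n ** B)" by (simp add: matrix_mul_assoc)
  also have "\<dots> = (A ** B) ** matpow A n" using Suc by (simp add: matrix_mul_assoc)
  also have "\<dots> = B ** matpow A (Suc n)" using assms by (simp add: matrix_mul_assoc)
  finally show ?case .
qed

lemma matpow_inv:
  fixes A B :: "real^'n^'n"
  assumes "A ** B = mat 1"
  shows "matpow A n ** matpow B n = mat 1"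
proof (induction n)
  case 0 then show ?case by (simp add: matrix_mul_lid)
next
  case (Suc n)
  have "matpow A (Suc n) ** matpow B (Suc n) = (matpow A n ** A) ** (B ** matpow B n)"
    using matpow_comm[of A A n] by simp
  also have "\<dots> = matpow A n ** (A ** B) ** matpow B n" by (simp add: matrix_mul_assoc)
  also have "\<dots> = mat 1" using assms Suc by (simp add: matrix_mul_rid)
  finally show ?case .
qed

lemma jneg_pow: "k \<noteq> 0 \<Longrightarrow> jnegmat k (Suc p) = matpow (Mi k) (Suc p) ** N0mat k"
proof (induction p)
  case 0 then show ?case using base by (simp add: matrix_mul_rid)
next
  case (Suc p)
  then show ?case using step[of k p] by (simp add: matrix_mul_assoc)
qed

theorem mainTheorem11:
  fixes k :: real and n :: nat
  assumes "k > 0" and "n \<ge> 1"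
  shows "jnegmat k n = matpow (matrix_inv (Mmat k)) n ** N0mat k
       \<and> jnegmat k n = N0mat k ** matpow (matrix_inv (Mmat k)) n
       \<and> matrix_inv (jposmat k n) = matrix_inv (N0mat k) ** jnegmat k n ** matrix_inv (N0mat k)"
proof -
  have k: "k \<noteq> 0" using assms by simp
  have MI: "matrix_inv (Mmat k) = Mi k" using inv_unique MMi[OF k] by blast
  obtain p where n: "n = Suc p" using assms(2) by (cases n) auto
  have J1: "jnegmat k n = matpow (Mi k) n ** N0mat k" using jneg_pow[OF k] n by simp
  have C: "matpow (Mi k) n ** N0mat k = N0mat k ** matpow (Mi k) n"
    using matpow_comm comm[OF k, symmetric] by blast
  have inv: "invertible (N0mat k)" using detN0[OF assms(1)] invertible_det_nz by blast
  note NI = inv_props[OF inv]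
  have P: "matpow (Mmat k) n ** matpow (Mi k) n = mat 1" using matpow_inv MMi[OF k] by blast
  have "(N0mat k ** matpow (Mmat k) n) ** (matpow (Mi k) n ** matrix_inv (N0mat k))
     = N0mat k ** (matpow (Mmat k) n ** matpow (Mi k) n) ** matrix_inv (N0mat k)"
    by (simp add: matrix_mul_assoc)
  also have "\<dots> = mat 1" using P NI by (simp add: matrix_mul_rid)
  finally have "matrix_inv (jposmat k n) = matpow (Mi k) n ** matrix_inv (N0mat k)"
    unfolding jposmat_def by (rule inv_unique)
  also have "\<dots> = (matrix_inv (N0mat k) ** N0mat k) ** matpow (Mi k) n ** matrix_inv (N0mat k)"
    using NI by (simp add: matrix_mul_lid)
  also have "\<dots> = matrix_inv (N0mat k) ** jnegmat k n ** matrix_inv (N0mat k)"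
    using J1 C by (simp add: matrix_mul_assoc)
  finally show ?thesis using J1 C MI by simp
qed

end
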